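(* Let $n\ge 3$, let $\mathbf{p}\in\mathbb{Q}^{n!}$ be any profile, and write $Q_{\mathbf{p}}=\sum_{\ell=1}^{n!}p_\ell R_\ell$ in column form as $Q_{\mathbf{p}}=[\mathbf{q}_1\ \cdots\ \mathbf{q}_n]$. Define $\mathbf{t}_k=\sum_{j=1}^{k}\mathbf{q}_j$ for $k=1,\dots,n-1$. Then a face $G$ of the braid arrangement is a possible outcome for a positional voting procedure with input $\mathbf{p}$ (i.e. there is a nonzero $\mathbf{w}\in\overline{W}$ with $Q_{\mathbf{p}}\mathbf{w}\in G$) if and only if $G$ intersects the convex hull of $\mathbf{t}_1,\dots,\mathbf{t}_{n-1}$.
   Context: Work over $\mathbb{Q}$. Label the permutations of $S_n$ as $\sigma_1,\dots,\sigma_{n!}$ (lexicographically in one-line notation), where $\sigma_\ell$ is the ranking in which candidate $\sigma_\ell(k)$ is placed $k$-th; $p_\ell$ is the number of voters with preference $\sigma_\ell$. $R_\ell$ is the $n\times n$ permutation matrix with $R_\ell(i,j)=1$ iff $\sigma_\ell(j)=i$, so $Q_{\mathbf{p}}(i,j)$ is the number of voters ranking candidate $i$ in position $j$. $\overline{W}=\{\mathbf{x}\in\mathbb{Q}^n : x_1\ge\cdots\ge x_n,\ x_1+\cdots+x_n=0\}$ is the set of weighting vectors; using $\mathbf{w}$, the results vector is $Q_{\mathbf{p}}\mathbf{w}$. The faces of the braid arrangement are the equivalence classes of $\mathbb{Q}^n$ under the relation: $\mathbf{x}\sim\mathbf{y}$ iff for all $i,j$, $x_i>x_j\iff y_i>y_j$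 and $x_i=x_j\iff y_i=y_j$ (equivalently, faces correspond to ordered set partitions of the candidates, i.e. rankings with ties). *)

theory Defs
  imports Complex_Main "HOL-Combinatorics.Permutations"
begin

text \<open>Candidates and positions are indexed 0..n-1. Vectors in Q^n are functions
nat => rat vanishing outside {0..<n}. A ranking sigma places candidate sigma k in
position k; the rankings are the permutations of {0..<n}. A profile assigns to each
ranking a rational number of voters (values outside the permutations are irrelevant).\<close>

definition vecs :: "nat \<Rightarrow> (nat \<Rightarrow> rat) set" where
  "vecs n = {x. \<forall>i\<ge>n. x i = 0}"

definition rankings :: "nat \<Rightarrow> (nat \<Rightarrow> nat) set" where
  "rankings n = {\<sigma>. \<sigma> permutes {0..<n}}"

definition perm_mat :: "(nat \<Rightarrow> nat) \<Rightarrow> nat \<Rightarrow> nat \<Rightarrow> rat" where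
  "perm_mat \<sigma> i j = (if \<sigma> j = i then 1 else 0)"

definition Qmat :: "nat \<Rightarrow> ((nat \<Rightarrow> nat) \<Rightarrow> rat) \<Rightarrow> nat \<Rightarrow> nat \<Rightarrow> rat" where
  "Qmat n p i j = (\<Sum>\<sigma>\<in>rankings n. p \<sigma> * perm_mat \<sigma> i j)"

definition mat_vec :: "nat \<Rightarrow> (nat \<Rightarrow> nat \<Rightarrow> rat) \<Rightarrow> (nat \<Rightarrow> rat) \<Rightarrow> nat \<Rightarrow> rat" where
  "mat_vec n A w = (\<lambda>i. if i < n then (\<Sum>j<n. A i j * w j) else 0)"

definition qcol :: "nat \<Rightarrow> ((nat \<Rightarrow> nat) \<Rightarrow> rat) \<Rightarrow> nat \<Rightarrow> nat \<Rightarrow> rat" where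
  "qcol n p j = (\<lambda>i. if i < n then Qmat n p i j else 0)"

text \<open>t_k = q_1 + ... + q_k (1-based), i.e. sum of the first k columns.\<close>
definition tvec :: "nat \<Rightarrow> ((nat \<Rightarrow> nat) \<Rightarrow> rat) \<Rightarrow> nat \<Rightarrow> nat \<Rightarrow> rat" where
  "tvec n p k = (\<lambda>i. \<Sum>j<k. qcol n p j i)"

definition Wbar :: "nat \<Rightarrow> (nat \<Rightarrow> rat) set" where
  "Wbar n = {x \<in> vecs n. (\<forall>i j. i \<le> j \<longrightarrow> j < n \<longrightarrow> x j \<le> x i) \<and> (\<Sum>i<n. x i) = 0}"

definition braid_equiv :: "nat \<Rightarrow> (nat \<Rightarrow> rat) \<Rightarrow> (nat \<Rightarrow> rat) \<Rightarrow> bool" where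
  "braid_equiv n x y \<longleftrightarrow> (\<forall>i<n. \<forall>j<n. (x i > x j \<longleftrightarrow> y i > y j) \<and> (x i = x j \<longleftrightarrow> y i = y j))"

definition braid_face :: "nat \<Rightarrow> (nat \<Rightarrow> rat) set \<Rightarrow> bool" where
  "braid_face n G \<longleftrightarrow> (\<exists>x\<in>vecs n. G = {y \<in> vecs n. braid_equiv n x y})"

definition rat_convex_hull :: "nat set \<Rightarrow> (nat \<Rightarrow> nat \<Rightarrow> rat) \<Rightarrow> (nat \<Rightarrow> rat) set" where
  "rat_convex_hull K v = {(\<lambda>i. \<Sum>k\<in>K. c k * v k i) | c. (\<forall>k\<in>K. 0 \<le> c k) \<and> (\<Sum>k\<in>K. c k) = 1}"

definition possible_outcome :: "nat \<Rightarrow> ((nat \<Rightarrow> nat) \<Rightarrow> rat) \<Rightarrow> (nat \<Rightarrow> rat) set \<Rightarrow> bool" where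
  "possible_outcome n p G \<longleftrightarrow>
     (\<exists>w\<in>Wbar n. w \<noteq> (\<lambda>_. 0) \<and> mat_vec n (Qmat n p) w \<in> G)"

end

theory Submission
  imports Defs
begin

lemma abel_key:
  fixes b F R x wm :: rat
  shows "b * F + R + x * wm = wm * (F + x) + ((b - wm) * F + R)"
  by (simp add: algebra_simps)

lemma abel_sum:
  fixes f w :: "nat \<Rightarrow> rat"
  assumes "m \<ge> 1"
  shows "(\<Sum>j<m. f j * w j) = w (m-1) * (\<Sum>j<m. f j) + (\<Sum>k\<in>{1..m-1}. (w (k-1) - w k) * (\<Sum>j<k. f j))"
  using assms
proof (induction m rule: dec_induct)
  case base
  then show ?case by simp
next
  case (step m)
  have I: "{1..Suc m - 1} = insert m {1..m-1}" using step(1) by auto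
  have nm: "m \<notin> {1..m-1}" using step(1) by auto
  define F where "F = (\<Sum>j<m. f j)"
  define R where "R = (\<Sum>k\<in>{1..m-1}. (w (k-1) - w k) * (\<Sum>j<k. f j))"
  have e1: "(\<Sum>k\<in>{1..Suc m-1}. (w (k-1) - w k) * (\<Sum>j<k. f j)) = (w (m-1) - w m) * F + R"
    unfolding I R_def F_def by (rule sum.insert[OF finite_atLeastAtMost nm])
  have e2: "(\<Sum>j<Suc m. f j * w j) = (\<Sum>j<m. f j * w j) + f m * w m" by simp
  have e3: "(\<Sum>j<Suc m. f j) = F + f m" unfolding F_def by simp
  have e4: "(\<Sum>j<m. f j * w j) = w (m-1) * F + R" using step(3) unfolding F_def R_def .
  have e5: "w (Suc m - 1) = w m" by simp
  show ?case unfolding e1 e2 e3 e4 e5 by (rule abel_key)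
qed

lemma telescope:
  fixes w :: "nat \<Rightarrow> rat"
  shows "(\<Sum>k\<in>{1..m}. (w (k-1) - w k)) = w 0 - w m"
  by (induction m) (auto simp: atLeastAtMostSuc_conv)

lemma face_inv:
  assumes "braid_face n G" "y \<in> vecs n" "z \<in> vecs n" "(A::rat) > 0"
    "\<forall>i<n. z i = A * y i + b"
  shows "z \<in> G \<longleftrightarrow> y \<in> G"
proof -
  obtain x where x: "G = {y \<in> vecs n. braid_equiv n x y}" using assms(1) braid_face_def by auto
  have lt: "z j < z i \<longleftrightarrow> y j < y i" if "i < n" "j < n" for i j
    using assms(4,5) that by (simp add: mult_less_cancel_left_pos)
  have eq: "z i = z j \<longleftrightarrow> y i = y j" if "i < n" "j < n" for i j
    using assms(4,5) that by simp
  have "braid_equiv n x z \<longleftrightarrow> braid_equiv n x y"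
    unfolding braid_equiv_def by (simp add: lt eq)
  then show ?thesis using x assms(2,3) by auto
qed

lemma row_sum:
  assumes "i < n"
  shows "(\<Sum>j<n. Qmat n p i j) = (\<Sum>\<sigma>\<in>rankings n. p \<sigma>)"
proof -
  have "(\<Sum>j<n. Qmat n p i j) = (\<Sum>\<sigma>\<in>rankings n. p \<sigma> * (\<Sum>j<n. perm_mat \<sigma> i j))"
    unfolding Qmat_def sum_distrib_left by (rule sum.swap)
  also have "\<dots> = (\<Sum>\<sigma>\<in>rankings n. p \<sigma>)"
  proof (rule sum.cong)
    fix \<sigma> assume "\<sigma> \<in> rankings n"
    then have s: "\<sigma> permutes {0..<n}" by (simp add: rankings_def)
    have "(\<Sum>j<n. perm_mat \<sigma> i j) = (\<Sum>j<n. if j = inv \<sigma> i then 1 else 0)"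
    proof -
      have key: "(\<sigma> j = i) = (j = inv \<sigma> i)" for j using permutes_inv_eq[OF s] by metis
      show ?thesis unfolding perm_mat_def key ..
    qed
    also have "\<dots> = 1"
    proof -
      have "inv \<sigma> i \<in> {0..<n}" using permutes_in_image[OF permutes_inv[OF s]] assms by auto
      then show ?thesis by (simp add: sum.delta)
    qed
    finally show "p \<sigma> * (\<Sum>j<n. perm_mat \<sigma> i j) = p \<sigma>" by simp
  qed simp
  finally show ?thesis .
qed

lemma Qw_formula:
  assumes "n \<ge> 1" "i < n"
  shows "mat_vec n (Qmat n p) w i = w (n-1) * (\<Sum>\<sigma>\<in>rankings n. p \<sigma>)
     + (\<Sum>k\<in>{1..n-1}. (w (k-1) - w k) * tvec n p k i)"
proof -
  have t: "tvec n p k i = (\<Sum>j<k. Qmat n p i j)" for k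
    unfolding tvec_def qcol_def using assms by simp
  have "mat_vec n (Qmat n p) w i = (\<Sum>j<n. Qmat n p i j * w j)"
    unfolding mat_vec_def using assms by simp
  also have "\<dots> = w (n-1) * (\<Sum>j<n. Qmat n p i j) + (\<Sum>k\<in>{1..n-1}. (w (k-1) - w k) * (\<Sum>j<k. Qmat n p i j))"
    by (rule abel_sum[OF assms(1)])
  also have "\<dots> = w (n-1) * (\<Sum>\<sigma>\<in>rankings n. p \<sigma>) + (\<Sum>k\<in>{1..n-1}. (w (k-1) - w k) * tvec n p k i)"
    by (simp only: row_sum[OF assms(2)] t)
  finally show ?thesis .
qed

theorem theorem4p2:
  fixes n :: nat and p :: "(nat \<Rightarrow> nat) \<Rightarrow> rat" and G :: "(nat \<Rightarrow> rat) set"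
  assumes "n \<ge> 3" and "braid_face n G"
  shows "possible_outcome n p G \<longleftrightarrow> G \<inter> rat_convex_hull {1..n-1} (tvec n p) \<noteq> {}"
proof
  have n1: "n \<ge> 1" using assms(1) by simp
  let ?S = "\<Sum>\<sigma>\<in>rankings n. p \<sigma>"
  assume "possible_outcome n p G"
  then obtain w where w: "w \<in> Wbar n" "w \<noteq> (\<lambda>_. 0)" "mat_vec n (Qmat n p) w \<in> G"
    unfolding possible_outcome_def by auto
  define a where "a k = w (k-1) - w k" for k
  define A where "A = (\<Sum>k\<in>{1..n-1}. a k)"
  have a0: "a k \<ge> 0" if "k \<in> {1..n-1}" for k
    using w(1) that unfolding a_def Wbar_def by auto
  have A: "A = w 0 - w (n-1)" unfolding A_def a_def by (rule telescope)
  have Apos: "A > 0"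
  proof (rule ccontr)
    assume "\<not> A > 0"
    have "A \<ge> 0" unfolding A_def by (rule sum_nonneg) (use a0 in auto)
    then have "A = 0" using \<open>\<not> A > 0\<close> by simp
    then have eq: "w j = w 0" if "j < n" for j
    proof -
      have "w j \<le> w 0" using w(1) that unfolding Wbar_def by auto
      moreover have "w (n-1) \<le> w j" using w(1) that unfolding Wbar_def by auto
      ultimately show ?thesis using A \<open>A = 0\<close> by simp
    qed
    have "(\<Sum>i<n. w i) = (\<Sum>i<n. w 0)"
      by (intro sum.cong refl) (metis eq lessThan_iff)
    then have "(\<Sum>i<n. w i) = of_nat n * w 0" by simp
    then have "w 0 = 0" using w(1) n1 unfolding Wbar_def by simp
    have "w = (\<lambda>_. 0)"
    proof
      fix i show "w i = 0"
      proof (cases "i < n")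
        case True then show ?thesis using eq[OF True] \<open>w 0 = 0\<close> by simp
      next
        case False then show ?thesis using w(1) unfolding Wbar_def vecs_def by simp
      qed
    qed
    then show False using w(2) by simp
  qed
  define c where "c k = a k / A" for k
  define y where "y = (\<lambda>i. \<Sum>k\<in>{1..n-1}. c k * tvec n p k i)"
  have yhull: "y \<in> rat_convex_hull {1..n-1} (tvec n p)"
    unfolding rat_convex_hull_def y_def
  proof (intro CollectI exI conjI)
    show "\<forall>k\<in>{1..n-1}. 0 \<le> c k" using a0 Apos unfolding c_def by auto
    show "(\<Sum>k\<in>{1..n-1}. c k) = 1" unfolding c_def using Apos
      by (simp add: sum_divide_distrib[symmetric] A_def)
  qed simp
  have yv: "y \<in> vecs n" unfolding vecs_def y_def tvec_def qcol_def by simp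
  have zv: "mat_vec n (Qmat n p) w \<in> vecs n" unfolding vecs_def mat_vec_def by simp
  have rel: "\<forall>i<n. mat_vec n (Qmat n p) w i = A * y i + w (n-1) * ?S"
  proof (intro allI impI)
    fix i assume "i < n"
    have "A * y i = (\<Sum>k\<in>{1..n-1}. (w (k-1) - w k) * tvec n p k i)"
      unfolding y_def c_def a_def sum_distrib_left using Apos by (intro sum.cong) auto
    then show "mat_vec n (Qmat n p) w i = A * y i + w (n-1) * ?S"
      using Qw_formula[OF n1 \<open>i<n\<close>] by simp
  qed
  have "y \<in> G" using face_inv[OF assms(2) yv zv Apos rel] w(3) by simp
  then show "G \<inter> rat_convex_hull {1..n-1} (tvec n p) \<noteq> {}" using yhull by auto
next
  have n1: "n \<ge> 1" using assms(1) by simp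
  let ?S = "\<Sum>\<sigma>\<in>rankings n. p \<sigma>"
  assume "G \<inter> rat_convex_hull {1..n-1} (tvec n p) \<noteq> {}"
  then obtain y c where yG: "y \<in> G" and y: "y = (\<lambda>i. \<Sum>k\<in>{1..n-1}. c k * tvec n p k i)"
    and c0: "\<forall>k\<in>{1..n-1}. 0 \<le> c k" and c1: "(\<Sum>k\<in>{1..n-1}. c k) = 1"
    unfolding rat_convex_hull_def by auto
  define g where "g j = (\<Sum>k\<in>{1..n-1}. if j < k then c k else 0)" for j
  define m where "m = (\<Sum>j<n. g j) / of_nat n"
  define w where "w j = (if j < n then g j - m else 0)" for j
  have gmono: "g j \<le> g i" if "i \<le> j" for i j
    unfolding g_def using c0 that by (intro sum_mono) auto
  have wW: "w \<in> Wbar n"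
    unfolding Wbar_def vecs_def
  proof (intro CollectI conjI allI impI)
    show "(\<Sum>i<n. w i) = 0"
    proof -
      have "(\<Sum>i<n. w i) = (\<Sum>i<n. g i - m)" unfolding w_def by (intro sum.cong) auto
      also have "\<dots> = (\<Sum>i<n. g i) - of_nat n * m" by (simp add: sum_subtractf)
      also have "\<dots> = 0" unfolding m_def using n1 by simp
      finally show ?thesis .
    qed
  next
    fix i assume "n \<le> i" then show "w i = 0" unfolding w_def by simp
  next
    fix i j assume "i \<le> j" "j < n"
    then show "w j \<le> w i" unfolding w_def using gmono[OF \<open>i \<le> j\<close>] by simp
  qed
  have gdiff: "g (k-1) - g k = c k" if "k \<in> {1..n-1}" for k
  proof -
    have "g (k-1) - g k = (\<Sum>k'\<in>{1..n-1}. if k' = k then c k else 0)"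
      unfolding g_def sum_subtractf[symmetric] using that by (intro sum.cong) auto
    then show ?thesis using that by (simp add: sum.delta)
  qed
  have gn: "g (n-1) = 0" unfolding g_def by (intro sum.neutral) auto
  have "g 0 = (\<Sum>k\<in>{1..n-1}. c k)" unfolding g_def by (intro sum.cong) auto
  then have g0: "g 0 = 1" using c1 by simp
  have "w 0 = g 0 - m" "w (n-1) = g (n-1) - m" unfolding w_def using n1 by auto
  then have "w 0 \<noteq> w (n-1)" using gn g0 by simp
  then have wnz: "w \<noteq> (\<lambda>_. 0)" by force
  have wdiff: "w (k-1) - w k = c k" if "k \<in> {1..n-1}" for k
  proof -
    have "k - 1 < n" "k < n" using that by auto
    then show ?thesis using gdiff[OF that] unfolding w_def by simp
  qed
  have yv: "y \<in> vecs n" unfolding vecs_def y tvec_def qcol_def by simp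
  have zv: "mat_vec n (Qmat n p) w \<in> vecs n" unfolding vecs_def mat_vec_def by simp
  have rel: "\<forall>i<n. mat_vec n (Qmat n p) w i = 1 * y i + w (n-1) * ?S"
  proof (intro allI impI)
    fix i assume "i < n"
    have "(\<Sum>k\<in>{1..n-1}. (w (k-1) - w k) * tvec n p k i) = y i"
      unfolding y using wdiff by (intro sum.cong) auto
    then show "mat_vec n (Qmat n p) w i = 1 * y i + w (n-1) * ?S"
      using Qw_formula[OF n1 \<open>i<n\<close>] by simp
  qed
  have "mat_vec n (Qmat n p) w \<in> G" using face_inv[OF assms(2) yv zv _ rel] yG by simp
  then show "possible_outcome n p G" unfolding possible_outcome_def using wW wnz by blast
qed

end
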